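(* For all positive integers $l,m,n$, the multigraph $K_{m,n}^l$ is an abelian $G$-graph.
   Context: $K_{m,n}^l$ is the loopless multigraph with vertex set partitioned into a part of $m$ vertices and a part of $n$ vertices, in which every vertex of the first part is joined to every vertex of the second part by exactly $l$ parallel edges, and there are no other edges. For a group $G$ and a multiset $S$ of elements of $G$, $\Phi(G,S)$ is the multigraph whose vertex set is the union over the members $s$ of $S$ (with multiplicity) of $V_s=\{\langle s\rangle x: x\in G\}$ (right cosets), with, for $\langle s\rangle x\in V_s$, $\langle t\rangle y\in V_t$, $s,t$ distinct members of $S$, one edge labeled $g$ between them for each $g\in\langle s\rangle x\cap\langle t\rangle y$, and no other edges. An abelian $G$-graph is a multigraph isomorphic (ignoring labels) to $\Phi(G,S)$ for some abelian group $G$ and multiset $S$. *)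

theory Defs
  imports "HOL-Algebra.Algebra"
begin

text \<open>A loopless multigraph is represented by a vertex set V together with a
 symmetric multiplicity function mu, where mu x y is the number of parallel
 edges between x and y.\<close>

definition mg_iso :: "'v set \<Rightarrow> ('v \<Rightarrow> 'v \<Rightarrow> nat) \<Rightarrow> 'w set \<Rightarrow> ('w \<Rightarrow> 'w \<Rightarrow> nat) \<Rightarrow> bool" where
  "mg_iso V mu W nu \<longleftrightarrow>
     (\<exists>f. bij_betw f V W \<and> (\<forall>x\<in>V. \<forall>y\<in>V. mu x y = nu (f x) (f y)))"

definition K_verts :: "nat \<Rightarrow> nat \<Rightarrow> (nat + nat) set" where
  "K_verts m n = Inl ` {..<m} \<union> Inr ` {..<n}"

definition K_mult :: "nat \<Rightarrow> (nat + nat) \<Rightarrow> (nat + nat) \<Rightarrow> nat" where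
  "K_mult l x y =
     (case (x, y) of (Inl _, Inr _) \<Rightarrow> l | (Inr _, Inl _) \<Rightarrow> l | _ \<Rightarrow> 0)"

text \<open>Phi(G,S): S is a multiset of group elements, given as a list (order is
 irrelevant up to isomorphism).\<close>

definition Phi_verts :: "('g, 'b) monoid_scheme \<Rightarrow> 'g list \<Rightarrow> (nat \<times> 'g set) set" where
  "Phi_verts G S = {(i, C) | i C. i < length S \<and> C \<in> rcosets\<^bsub>G\<^esub> (generate G {S ! i})}"

definition Phi_mult :: "(nat \<times> 'g set) \<Rightarrow> (nat \<times> 'g set) \<Rightarrow> nat" where
  "Phi_mult u v = (if fst u \<noteq> fst v then card (snd u \<inter> snd v) else 0)"

definition abelian_G_graph :: "'v set \<Rightarrow> ('v \<Rightarrow> 'v \<Rightarrow> nat) \<Rightarrow> bool" where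
  "abelian_G_graph V mu \<longleftrightarrow>
     (\<exists>(G :: nat monoid) S. comm_group G \<and> finite (carrier G) \<and> set S \<subseteq> carrier G \<and>
        mg_iso V mu (Phi_verts G S) Phi_mult)"

end

theory Submission
  imports Defs
begin


definition zz :: "nat \<Rightarrow> nat \<Rightarrow> nat monoid" where
 "zz g M = \<lparr>carrier = {..<g*M},
    monoid.mult = (\<lambda>u v. (u mod g + v mod g) mod g + g * ((u div g + v div g) mod M)), one = 0\<rparr>"

lemma enc_mod: "a < (g::nat) \<Longrightarrow> (a + g*b) mod g = a" by simp
lemma enc_div: "a < (g::nat) \<Longrightarrow> (a + g*b) div g = b" by simp
lemma enc_lt: "a < (g::nat) \<Longrightarrow> b < M \<Longrightarrow> a + g*b < g*M"
proof -
  assume "a < g" "b < M"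
  hence "a + g*b < g + g*b" by simp
  also have "\<dots> = g * (b+1)" by simp
  also have "\<dots> \<le> g * M" using \<open>b < M\<close> by (intro mult_le_mono2) simp
  finally show ?thesis .
qed

lemma zz_mult: "u \<otimes>\<^bsub>zz g M\<^esub> v = (u mod g + v mod g) mod g + g * ((u div g + v div g) mod M)"
  by (simp add: zz_def)

lemma zz_mult_mod: "0 < g \<Longrightarrow> (u \<otimes>\<^bsub>zz g M\<^esub> v) mod g = (u mod g + v mod g) mod g"
  unfolding zz_mult by (rule enc_mod) simp
lemma zz_mult_div: "0 < g \<Longrightarrow> (u \<otimes>\<^bsub>zz g M\<^esub> v) div g = (u div g + v div g) mod M"
  unfolding zz_mult by (rule enc_div) simp

lemma zz_eq: "(u::nat) mod g = v mod g \<Longrightarrow> u div g = v div g \<Longrightarrow> u = v"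
  by (metis div_mult_mod_eq)

lemma zz_carrier: "carrier (zz g M) = {..<g*M}" by (simp add: zz_def)
lemma zz_one: "\<one>\<^bsub>zz g M\<^esub> = 0" by (simp add: zz_def)

lemma zz_closed: "0 < g \<Longrightarrow> 0 < M \<Longrightarrow> u \<otimes>\<^bsub>zz g M\<^esub> v \<in> carrier (zz g M)"
  unfolding zz_mult zz_carrier by (auto intro!: enc_lt)

lemma div_lt: "u < g*M \<Longrightarrow> (u::nat) div g < M"
  by (simp add: less_mult_imp_div_less mult.commute)

lemma zz_comm_group:
  assumes g: "0 < g" and M: "0 < M"
  shows "comm_group (zz g M)"
proof (rule comm_groupI)
  fix x y assume "x \<in> carrier (zz g M)" "y \<in> carrier (zz g M)"
  show "x \<otimes>\<^bsub>zz g M\<^esub> y \<in> carrier (zz g M)" using zz_closed g M by blast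
next
  show "\<one>\<^bsub>zz g M\<^esub> \<in> carrier (zz g M)" using g M by (simp add: zz_one zz_carrier)
next
  fix x y z assume "x \<in> carrier (zz g M)" "y \<in> carrier (zz g M)" "z \<in> carrier (zz g M)"
  show "x \<otimes>\<^bsub>zz g M\<^esub> y \<otimes>\<^bsub>zz g M\<^esub> z = x \<otimes>\<^bsub>zz g M\<^esub> (y \<otimes>\<^bsub>zz g M\<^esub> z)"
  proof (rule zz_eq[of _ g])
    show "(x \<otimes>\<^bsub>zz g M\<^esub> y \<otimes>\<^bsub>zz g M\<^esub> z) mod g = (x \<otimes>\<^bsub>zz g M\<^esub> (y \<otimes>\<^bsub>zz g M\<^esub> z)) mod g"
      unfolding zz_mult_mod[OF g] by (simp add: mod_add_left_eq mod_add_right_eq add.assoc)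
    show "(x \<otimes>\<^bsub>zz g M\<^esub> y \<otimes>\<^bsub>zz g M\<^esub> z) div g = (x \<otimes>\<^bsub>zz g M\<^esub> (y \<otimes>\<^bsub>zz g M\<^esub> z)) div g"
      unfolding zz_mult_div[OF g] by (simp add: mod_add_left_eq mod_add_right_eq add.assoc)
  qed
next
  fix x y assume "x \<in> carrier (zz g M)" "y \<in> carrier (zz g M)"
  show "x \<otimes>\<^bsub>zz g M\<^esub> y = y \<otimes>\<^bsub>zz g M\<^esub> x" by (simp add: zz_mult add.commute)
next
  fix x assume x: "x \<in> carrier (zz g M)"
  hence "x div g < M" by (simp add: zz_carrier div_lt)
  show "\<one>\<^bsub>zz g M\<^esub> \<otimes>\<^bsub>zz g M\<^esub> x = x"
  proof (rule zz_eq[of _ g])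
    show "(\<one>\<^bsub>zz g M\<^esub> \<otimes>\<^bsub>zz g M\<^esub> x) mod g = x mod g" unfolding zz_mult_mod[OF g] zz_one by simp
    show "(\<one>\<^bsub>zz g M\<^esub> \<otimes>\<^bsub>zz g M\<^esub> x) div g = x div g" unfolding zz_mult_div[OF g] zz_one using \<open>x div g < M\<close> by simp
  qed
next
  fix x assume x: "x \<in> carrier (zz g M)"
  define y where "y = (g - x mod g) mod g + g * ((M - x div g) mod M)"
  have xd: "x div g < M" using x by (simp add: zz_carrier div_lt)
  have yc: "y \<in> carrier (zz g M)" unfolding y_def zz_carrier using g M by (auto intro!: enc_lt)
  have ymod: "y mod g = (g - x mod g) mod g" unfolding y_def by (rule enc_mod) (simp add: g)
  have ydiv: "y div g = (M - x div g) mod M" unfolding y_def by (rule enc_div) (simp add: g)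
  have xm: "x mod g < g" using g by simp
  have h1: "((g - x mod g) mod g + x mod g) mod g = 0"
  proof (cases "x mod g = 0")
    case False thus ?thesis using xm by simp
  qed simp
  have h2: "((M - x div g) mod M + x div g) mod M = 0"
  proof (cases "x div g = 0")
    case False thus ?thesis using xd by simp
  qed simp
  have "y \<otimes>\<^bsub>zz g M\<^esub> x = 0"
  proof (rule zz_eq[of _ g])
    show "(y \<otimes>\<^bsub>zz g M\<^esub> x) mod g = 0 mod g" unfolding zz_mult_mod[OF g] ymod h1 by simp
    show "(y \<otimes>\<^bsub>zz g M\<^esub> x) div g = 0 div g" unfolding zz_mult_div[OF g] ydiv h2 by simp
  qed
  thus "\<exists>y\<in>carrier (zz g M). y \<otimes>\<^bsub>zz g M\<^esub> x = \<one>\<^bsub>zz g M\<^esub>" using yc by (auto simp: zz_one)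
qed

lemma zz_pow:
  assumes g: "0 < g" and M: "0 < M" and x: "x \<in> carrier (zz g M)"
  shows "(x [^]\<^bsub>zz g M\<^esub> (k::nat)) mod g = (k * (x mod g)) mod g \<and>
         (x [^]\<^bsub>zz g M\<^esub> k) div g = (k * (x div g)) mod M"
proof (induction k)
  case 0 thus ?case by (simp add: zz_one)
next
  case (Suc k)
  have e: "x [^]\<^bsub>zz g M\<^esub> Suc k = x [^]\<^bsub>zz g M\<^esub> k \<otimes>\<^bsub>zz g M\<^esub> x" by (rule nat_pow_Suc)
  have "(x [^]\<^bsub>zz g M\<^esub> Suc k) mod g = ((k * (x mod g)) mod g + x mod g) mod g"
    unfolding e zz_mult_mod[OF g] using Suc by simp
  also have "\<dots> = (k * (x mod g) + x mod g) mod g" by (rule mod_add_left_eq)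
  also have "\<dots> = (Suc k * (x mod g)) mod g" by (simp add: add.commute)
  finally have 1: "(x [^]\<^bsub>zz g M\<^esub> Suc k) mod g = (Suc k * (x mod g)) mod g" .
  have "(x [^]\<^bsub>zz g M\<^esub> Suc k) div g = ((k * (x div g)) mod M + x div g) mod M"
    unfolding e zz_mult_div[OF g] using Suc by simp
  also have "\<dots> = (k * (x div g) + x div g) mod M" by (rule mod_add_left_eq)
  also have "\<dots> = (Suc k * (x div g)) mod M" by (simp add: add.commute)
  finally show ?case using 1 by simp
qed



lemma abstract_K:
  fixes G :: "nat monoid" (structure) and s t :: nat and l m n :: nat
  assumes cg: "comm_group G" and fin: "finite (carrier G)"
    and sc: "s \<in> carrier G" and tc: "t \<in> carrier G"
    and cA: "card (generate G {s}) = n * l" and cB: "card (generate G {t}) = m * l"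
    and oG: "order G = m * n * l"
    and gen: "\<And>z. z \<in> carrier G \<Longrightarrow> \<exists>(i::nat) (j::nat). z = s [^]\<^bsub>G\<^esub> i \<otimes>\<^bsub>G\<^esub> t [^]\<^bsub>G\<^esub> j"
    and pos: "l > 0" "m > 0" "n > 0"
  shows "abelian_G_graph (K_verts m n) (K_mult l)"
proof -
  interpret comm_group G by (rule cg)
  define A where "A = generate G {s}"
  define B where "B = generate G {t}"
  have sA: "subgroup A G" unfolding A_def using sc by (intro generate_is_subgroup) auto
  have sB: "subgroup B G" unfolding B_def using tc by (intro generate_is_subgroup) auto
  have sinA: "s [^] (i::nat) \<in> A" for i
    unfolding A_def generate_pow[OF sc] by (metis (mono_tags, lifting) UNIV_I int_pow_int mem_Collect_eq)
  have tinB: "t [^] (i::nat) \<in> B" for i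
    unfolding B_def generate_pow[OF tc] by (metis (mono_tags, lifting) UNIV_I int_pow_int mem_Collect_eq)
  have AB: "A \<subseteq> carrier G" "B \<subseteq> carrier G" using sA sB subgroup.subset by auto
  have finA: "finite A" "finite B" using AB fin finite_subset by auto
  have rA: "card (rcosets A) = m"
  proof -
    have "card (rcosets A) * (n * l) = m * n * l" using lagrange[OF sA] cA oG A_def by simp
    then show ?thesis using pos by simp
  qed
  have rB: "card (rcosets B) = n"
  proof -
    have "card (rcosets B) * (m * l) = m * n * l" using lagrange[OF sB] cB oG B_def by simp
    then show ?thesis using pos by simp
  qed
  define c where "c = card (A \<inter> B)"
  have key: "card (C \<inter> D) = c" if C: "C \<in> rcosets A" and D: "D \<in> rcosets B" for C D
  proof -
    obtain u where u: "u \<in> carrier G" "C = A #> u" using C unfolding RCOSETS_def by auto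
    obtain v where v: "v \<in> carrier G" "D = B #> v" using D unfolding RCOSETS_def by auto
    have "v \<otimes> inv u \<in> carrier G" using u v by auto
    from gen[OF this] obtain i j :: nat where ij: "v \<otimes> inv u = s [^] i \<otimes> t [^] j" by blast
    define z where "z = s [^] i \<otimes> u"
    have zc: "z \<in> carrier G" using z_def sc u by auto
    have z1: "z \<in> A #> u" unfolding z_def r_coset_def using sinA by auto
    have "t [^] j \<otimes> z = v"
    proof -
      have "t [^] j \<otimes> z = s [^] i \<otimes> (t [^] j \<otimes> u)" unfolding z_def using sc tc u
        m_lcomm[of "t [^] j" "s [^] i" u] by simp
      also have "\<dots> = (s [^] i \<otimes> t [^] j) \<otimes> u" using sc tc u m_assoc[of "s [^] i" "t [^] j" u] by simp
      also have "\<dots> = v" using ij[symmetric] u v by (simp add: m_assoc)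
      finally show ?thesis .
    qed
    hence "z = inv (t [^] j) \<otimes> v" using inv_solve_left[of z "t [^] j" v] tc zc v by simp
    moreover have "inv (t [^] j) \<in> B" using subgroup.m_inv_closed[OF sB tinB] .
    ultimately have z2: "z \<in> B #> v" unfolding r_coset_def by blast
    have C': "C = A #> z" using repr_independence[OF z1 u(1) sA] u by simp
    have D': "D = B #> z" using repr_independence[OF z2 v(1) sB] v by simp
    have "C \<inter> D = (A \<inter> B) #> z"
    proof
      show "C \<inter> D \<subseteq> (A \<inter> B) #> z"
      proof
        fix w assume "w \<in> C \<inter> D"
        then obtain a b where ab: "a \<in> A" "b \<in> B" "w = a \<otimes> z" "w = b \<otimes> z"
          unfolding C' D' r_coset_def by auto
        hence "a = b" using AB zc by (metis r_cancel subsetD)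
        thus "w \<in> (A \<inter> B) #> z" using ab unfolding r_coset_def by auto
      qed
    qed (auto simp: C' D' r_coset_def)
    moreover have "(A \<inter> B) #> z \<in> rcosets (A \<inter> B)" using zc unfolding RCOSETS_def by auto
    moreover have "A \<inter> B \<subseteq> carrier G" using AB by auto
    ultimately show ?thesis using card_rcosets_equal[of "(A \<inter> B) #> z" "A \<inter> B"] c_def by simp
  qed
  have cl: "c = l"
  proof -
    have finR: "finite (rcosets B)" using rB pos card_ge_0_finite by auto
    have Aeq: "A = (\<Union>D\<in>rcosets B. A \<inter> D)" using rcosets_part_G[OF sB] AB by auto
    have dis: "\<forall>i\<in>rcosets B. \<forall>j\<in>rcosets B. i \<noteq> j \<longrightarrow> A \<inter> i \<inter> (A \<inter> j) = {}"
      using rcos_disjoint[OF sB] by (auto simp: pairwise_def disjnt_def)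
    have "card (\<Union>D\<in>rcosets B. A \<inter> D) = (\<Sum>D\<in>rcosets B. card (A \<inter> D))"
      by (rule card_UN_disjoint[OF finR]) (use finA dis in auto)
    hence "card A = (\<Sum>D\<in>rcosets B. card (A \<inter> D))" using Aeq by simp
    also have "\<dots> = (\<Sum>D\<in>rcosets B. c)"
    proof (rule sum.cong)
      fix D assume "D \<in> rcosets B"
      moreover have "A \<in> rcosets A" unfolding RCOSETS_def using coset_mult_one[OF AB(1)] one_closed by blast
      ultimately show "card (A \<inter> D) = c" using key by auto
    qed simp
    finally have "n * l = n * c" using cA rB A_def by simp
    thus ?thesis using pos by simp
  qed
  have finRA: "finite (rcosets A)" using rA pos card_ge_0_finite by auto
  have finRB: "finite (rcosets B)" using rB pos card_ge_0_finite by auto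
  obtain fA where fA: "bij_betw fA {0..<m} (rcosets A)" using ex_bij_betw_nat_finite[OF finRA] rA by auto
  obtain fB where fB: "bij_betw fB {0..<n} (rcosets B)" using ex_bij_betw_nat_finite[OF finRB] rB by auto
  define F where "F x = (case x of Inl i \<Rightarrow> (0::nat, fA i) | Inr j \<Rightarrow> (1, fB j))" for x
  have PV: "Phi_verts G [s, t] = {0} \<times> rcosets A \<union> {1} \<times> rcosets B"
  proof (rule Set.set_eqI)
    fix p :: "nat \<times> nat set"
    obtain i C where p: "p = (i, C)" by (cases p)
    have e: "(i, C) \<in> Phi_verts G [s, t] \<longleftrightarrow> i < 2 \<and> C \<in> rcosets (generate G {[s, t] ! i})"
      unfolding Phi_verts_def by (simp add: numeral_2_eq_2)
    show "p \<in> Phi_verts G [s, t] \<longleftrightarrow> p \<in> {0} \<times> rcosets A \<union> {1} \<times> rcosets B"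
    proof (cases "i = 0")
      case True thus ?thesis using e p A_def by simp
    next
      case False
      show ?thesis
      proof (cases "i = 1")
        case True thus ?thesis using e p B_def by simp
      next
        case False
        thus ?thesis using e p \<open>i \<noteq> 0\<close> by simp
      qed
    qed
  qed
  have fAi: "fA i \<in> rcosets A" if "i < m" for i using fA that bij_betwE by fastforce
  have fBj: "fB j \<in> rcosets B" if "j < n" for j using fB that bij_betwE by fastforce
  have iA: "inj_on fA {0..<m}" and iB: "inj_on fB {0..<n}" using fA fB bij_betw_def by auto
  have Kc: "\<And>x. x \<in> K_verts m n \<Longrightarrow> (\<exists>i. x = Inl i \<and> i < m) \<or> (\<exists>j. x = Inr j \<and> j < n)"
    unfolding K_verts_def by auto
  have bij: "bij_betw F (K_verts m n) (Phi_verts G [s, t])"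
    unfolding bij_betw_def PV
  proof
    show "inj_on F (K_verts m n)"
    proof (rule inj_onI)
      fix x y assume "x \<in> K_verts m n" "y \<in> K_verts m n" "F x = F y"
      thus "x = y"
      proof (elim Kc[elim_format] disjE exE conjE)
        fix i i' assume "x = Inl i" "i < m" "y = Inl i'" "i' < m" "F x = F y"
        thus "x = y" using inj_onD[OF iA, of i i'] unfolding F_def by simp
      next
        fix j j' assume "x = Inr j" "j < n" "y = Inr j'" "j' < n" "F x = F y"
        thus "x = y" using inj_onD[OF iB, of j j'] unfolding F_def by simp
      qed (auto simp: F_def)
    qed
    show "F ` K_verts m n = {0} \<times> rcosets A \<union> {1} \<times> rcosets B"
    proof
      show "F ` K_verts m n \<subseteq> {0} \<times> rcosets A \<union> {1} \<times> rcosets B"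
      proof
        fix p assume "p \<in> F ` K_verts m n"
        then obtain x where "x \<in> K_verts m n" "p = F x" by auto
        thus "p \<in> {0} \<times> rcosets A \<union> {1} \<times> rcosets B"
          by (elim Kc[elim_format] disjE exE conjE) (auto simp: F_def fAi fBj)
      qed
      show "{0} \<times> rcosets A \<union> {1} \<times> rcosets B \<subseteq> F ` K_verts m n"
      proof
        fix p :: "nat \<times> nat set" assume "p \<in> {0} \<times> rcosets A \<union> {1} \<times> rcosets B"
        then consider C where "p = (0, C)" "C \<in> rcosets A" | D where "p = (1, D)" "D \<in> rcosets B" by auto
        then show "p \<in> F ` K_verts m n"
        proof cases
          case 1
          then obtain i where "i < m" "C = fA i" using fA unfolding bij_betw_def by (metis atLeastLessThan_iff imageE)
          then show ?thesis using 1 unfolding K_verts_def F_def by (auto intro!: image_eqI[of _ _ "Inl i"])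
        next
          case 2
          then obtain j where "j < n" "D = fB j" using fB unfolding bij_betw_def by (metis atLeastLessThan_iff imageE)
          then show ?thesis using 2 unfolding K_verts_def F_def by (auto intro!: image_eqI[of _ _ "Inr j"])
        qed
      qed
    qed
  qed
  have mult: "\<forall>x\<in>K_verts m n. \<forall>y\<in>K_verts m n. K_mult l x y = Phi_mult (F x) (F y)"
  proof (intro ballI)
    fix x y assume x: "x \<in> K_verts m n" and y: "y \<in> K_verts m n"
    show "K_mult l x y = Phi_mult (F x) (F y)"
    proof (cases x)
      case (Inl i)
      hence i: "i < m" using x unfolding K_verts_def by auto
      show ?thesis
      proof (cases y)
        case (Inl i') thus ?thesis using \<open>x = Inl i\<close> by (simp add: K_mult_def Phi_mult_def F_def)
      next
        case (Inr j)
        hence "j < n" using y unfolding K_verts_def by auto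
        hence "card (fA i \<inter> fB j) = l" using key[OF fAi[OF i] fBj] cl by simp
        thus ?thesis using \<open>x = Inl i\<close> Inr by (simp add: K_mult_def Phi_mult_def F_def)
      qed
    next
      case (Inr j)
      hence j: "j < n" using x unfolding K_verts_def by auto
      show ?thesis
      proof (cases y)
        case (Inr j') thus ?thesis using \<open>x = Inr j\<close> by (simp add: K_mult_def Phi_mult_def F_def)
      next
        case (Inl i)
        hence "i < m" using y unfolding K_verts_def by auto
        hence "card (fB j \<inter> fA i) = l" using key[OF fAi fBj[OF j]] cl by (simp add: Int_commute)
        thus ?thesis using \<open>x = Inr j\<close> Inl by (simp add: K_mult_def Phi_mult_def F_def)
      qed
    qed
  qed
  have "mg_iso (K_verts m n) (K_mult l) (Phi_verts G [s, t]) Phi_mult"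
    unfolding mg_iso_def using bij mult by blast
  moreover have "set [s, t] \<subseteq> carrier G" using sc tc by simp
  ultimately show ?thesis unfolding abelian_G_graph_def using cg fin by blast
qed


lemma aux:
  fixes G :: "nat monoid" (structure) and l m n g m' n' x y M :: nat
  assumes assms: "l > 0" "m > 0" "n > 0"
    and G_def: "G = zz g M" and g0: "g > 0" and mm: "m = m' * g" "n = n' * g"
    and m'0: "m' > 0" "n' > 0" and xy: "m' * x = n' * y + 1" and M_def: "M = m' * n' * g * l"
  shows "abelian_G_graph (K_verts m n) (K_mult l)"
proof -
  have M0: "M > 0" using m'0 g0 assms M_def by simp
  have cg: "comm_group G" unfolding G_def by (rule zz_comm_group[OF g0 M0])
  interpret comm_group G by (rule cg)
  have fin: "finite (carrier G)" by (simp add: G_def zz_carrier)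
  have oG: "order G = m * n * l" by (simp add: order_def G_def zz_carrier M_def mm)
  have zero_iff: "u = 0 \<longleftrightarrow> u mod g = 0 \<and> u div g = 0" for u :: nat
    by (metis div_0 div_mult_mod_eq mod_0 mult_0_right add_0)
  have ylt: "y mod g < g" "x mod g < g" using g0 by simp_all
  define s where "s = y mod g + g * (m' mod M)"
  define t where "t = x mod g + g * (n' mod M)"
  have sc: "s \<in> carrier G" unfolding s_def G_def zz_carrier using g0 M0 by (auto intro!: enc_lt)
  have tc: "t \<in> carrier G" unfolding t_def G_def zz_carrier using g0 M0 by (auto intro!: enc_lt)
  have smod: "s mod g = y mod g" "s div g = m' mod M" unfolding s_def using ylt by simp_all
  have tmod: "t mod g = x mod g" "t div g = n' mod M" unfolding t_def using ylt by simp_all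
  have spow: "(s [^] (k::nat)) mod g = (k * y) mod g" "(s [^] k) div g = (k * m') mod M" for k
    using zz_pow[OF g0 M0 sc[unfolded G_def], of k] unfolding G_def[symmetric] smod
    by (simp_all add: mod_mult_right_eq)
  have tpow: "(t [^] (k::nat)) mod g = (k * x) mod g" "(t [^] k) div g = (k * n') mod M" for k
    using zz_pow[OF g0 M0 tc[unfolded G_def], of k] unfolding G_def[symmetric] tmod
    by (simp_all add: mod_mult_right_eq)
  have one0: "\<one> = (0::nat)" by (simp add: G_def zz_one)
  have ords: "ord s = n * l"
    unfolding ord_unique[OF sc]
  proof
    fix k :: nat
    have "s [^] k = \<one> \<longleftrightarrow> (s [^] k) mod g = 0 \<and> (s [^] k) div g = 0"
      unfolding one0 by (rule zero_iff)
    also have "\<dots> \<longleftrightarrow> g dvd k * y \<and> M dvd k * m'"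
      unfolding spow by (simp add: dvd_eq_mod_eq_0)
    also have "M dvd k * m' \<longleftrightarrow> n * l dvd k"
    proof -
      have "M = m' * (n * l)" "k * m' = m' * k" unfolding M_def mm by simp_all
      thus ?thesis using m'0 by simp
    qed
    also have "g dvd k * y \<and> n * l dvd k \<longleftrightarrow> n * l dvd k"
      using mm by (metis dvd_mult dvd_mult_left dvd_trans mult.commute)
    finally show "s [^] k = \<one> \<longleftrightarrow> n * l dvd k" .
  qed
  have ordt: "ord t = m * l"
    unfolding ord_unique[OF tc]
  proof
    fix k :: nat
    have "t [^] k = \<one> \<longleftrightarrow> (t [^] k) mod g = 0 \<and> (t [^] k) div g = 0"
      unfolding one0 by (rule zero_iff)
    also have "\<dots> \<longleftrightarrow> g dvd k * x \<and> M dvd k * n'"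
      unfolding tpow by (simp add: dvd_eq_mod_eq_0)
    also have "M dvd k * n' \<longleftrightarrow> m * l dvd k"
    proof -
      have "M = n' * (m * l)" "k * n' = n' * k" unfolding M_def mm by simp_all
      thus ?thesis using m'0 by simp
    qed
    also have "g dvd k * x \<and> m * l dvd k \<longleftrightarrow> m * l dvd k"
      using mm by (metis dvd_mult dvd_mult_left dvd_trans mult.commute)
    finally show "t [^] k = \<one> \<longleftrightarrow> m * l dvd k" .
  qed
  have cA: "card (generate G {s}) = n * l" using generate_pow_card[OF sc] ords by simp
  have cB: "card (generate G {t}) = m * l" using generate_pow_card[OF tc] ordt by simp
  have gen: "\<exists>(i::nat) (j::nat). z = s [^] i \<otimes> t [^] j" if z: "z \<in> carrier G" for z
  proof -
    define p where "p = z mod g"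
    define q where "q = z div g"
    have plt: "p < g" using g0 p_def by simp
    have qlt: "q < M" using z unfolding q_def G_def zz_carrier by (simp add: div_lt)
    define c where "c = g * l - 1"
    define d where "d = g * m' * l - 1"
    have c1: "c + 1 = g * l" using g0 assms c_def by simp
    have d1: "d + 1 = g * m' * l" using g0 assms m'0 d_def by simp
    define i where "i = q * x + p * n' * c"
    define j where "j = p * m' + q * y * d"
    have e1: "i * y + j * x = g * (q * x * y * m' * l + p * n' * y * l) + p"
    proof -
      have "i * y + j * x = q * x * y + p * n' * y * c + p * (m' * x) + q * x * y * d"
        by (simp add: i_def j_def algebra_simps)
      also have "\<dots> = q * x * y * (d + 1) + p * n' * y * (c + 1) + p"
        by (simp add: xy algebra_simps)
      also have "\<dots> = g * (q * x * y * m' * l + p * n' * y * l) + p"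
        unfolding c1 d1 by (simp add: algebra_simps)
      finally show ?thesis .
    qed
    have e2: "i * m' + j * n' = q + M * (q * y + p)"
    proof -
      have "i * m' + j * n' = q * (m' * x) + p * n' * m' * c + p * m' * n' + q * y * n' * d"
        by (simp add: i_def j_def algebra_simps)
      also have "\<dots> = q + q * y * n' * (d + 1) + p * n' * m' * (c + 1)"
        by (simp add: xy algebra_simps)
      also have "\<dots> = q + M * (q * y + p)"
        unfolding c1 d1 M_def by (simp add: algebra_simps)
      finally show ?thesis .
    qed
    have "s [^] i \<otimes> t [^] j = z"
    proof (rule zz_eq[of _ g])
      have "(s [^] i \<otimes> t [^] j) mod g = ((i * y) mod g + (j * x) mod g) mod g"
        unfolding G_def zz_mult_mod[OF g0] unfolding G_def[symmetric] spow tpow ..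
      also have "\<dots> = (i * y + j * x) mod g" by (simp add: mod_add_eq)
      also have "\<dots> = p" unfolding e1 using plt by simp
      finally show "(s [^] i \<otimes> t [^] j) mod g = z mod g" using p_def by simp
      have "(s [^] i \<otimes> t [^] j) div g = ((i * m') mod M + (j * n') mod M) mod M"
        unfolding G_def zz_mult_div[OF g0] unfolding G_def[symmetric] spow tpow ..
      also have "\<dots> = (i * m' + j * n') mod M" by (simp add: mod_add_eq)
      also have "\<dots> = q" unfolding e2 using qlt by simp
      finally show "(s [^] i \<otimes> t [^] j) div g = z div g" using q_def by simp
    qed
    thus ?thesis by metis
  qed
  show ?thesis
    by (rule abstract_K[OF cg fin sc tc cA cB oG gen assms(1,2,3)])
qed

theorem proposition6:
  fixes l m n :: nat
  assumes "l > 0" and "m > 0" and "n > 0"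
  shows "abelian_G_graph (K_verts m n) (K_mult l)"
proof -
  define g where "g = gcd m n"
  have g0: "g > 0" using assms by (simp add: g_def)
  define m' where "m' = m div g"
  define n' where "n' = n div g"
  have mm: "m = m' * g" "n = n' * g" unfolding m'_def n'_def g_def by simp_all
  have m'0: "m' > 0" "n' > 0" using mm assms by (auto intro: gr0I)
  have cop: "coprime m' n'" unfolding m'_def n'_def g_def using assms by (intro div_gcd_coprime) simp
  obtain x y where xy: "m' * x = n' * y + 1"
    using bezout_nat[of m' n'] m'0 cop by auto
  show ?thesis
    by (rule aux[OF assms refl g0 mm m'0 xy refl])
qed

end
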